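(* Let $A>2$ be a fixed positive integer and let $(x_m)$ be defined by $x_0=0$, $x_1=1$, $x_{m+1}=Ax_m-x_{m-1}$. Let $n\ge3$ and consider the Markov chain on $\{0,1,\dots,n-1\}$ with $n\times n$ transition probability matrix $\mathbf P(A)=(P_{ij})$ given by: $P_{00}=1-\frac1A$, $P_{01}=\frac1A$; $P_{10}=1-\frac1A$, $P_{12}=\frac1A$; for $2\le i\le n-2$: $P_{i0}=1-\frac2A$, $P_{i,i-1}=\frac1A$, $P_{i,i+1}=\frac1A$; $P_{n-1,0}=1-\frac1A$, $P_{n-1,n-2}=\frac1A$; all other entries $0$. Then the steady state probability vector $\vec\pi=(\pi_0,\dots,\pi_{n-1})$ (the unique probability vector with $\vec\pi=\vec\pi\mathbf P(A)$) is given by $$\pi_i=\frac{x_{n-i}}{\sum_{l=1}^n x_l},\qquad i=0,1,\dots,n-1.$$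
   Context: The sequence $(x_m)$ defined by $x_0=0,x_1=1,x_{m+1}=Ax_m-x_{m-1}$ is called a balancing-like sequence; for $A=6$ it is the sequence of balancing numbers. *)

theory Defs
  imports Complex_Main
begin

fun bal :: "int \<Rightarrow> nat \<Rightarrow> int" where
  "bal A 0 = 0"
| "bal A (Suc 0) = 1"
| "bal A (Suc (Suc m)) = A * bal A (Suc m) - bal A m"

definition transP :: "int \<Rightarrow> nat \<Rightarrow> nat \<Rightarrow> nat \<Rightarrow> real" where
  "transP A n i j =
     (if i = 0 then (if j = 0 then 1 - 1 / real_of_int A else if j = 1 then 1 / real_of_int A else 0)
      else if i = 1 then (if j = 0 then 1 - 1 / real_of_int A else if j = 2 then 1 / real_of_int A else 0)
      else if i = n - 1 then (if j = 0 then 1 - 1 / real_of_int A else if j = n - 2 then 1 / real_of_int A else 0)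
      else if 2 \<le> i \<and> i \<le> n - 2 then
        (if j = 0 then 1 - 2 / real_of_int A else if j = i - 1 \<or> j = i + 1 then 1 / real_of_int A else 0)
      else 0)"

definition stationary_dist :: "nat \<Rightarrow> (nat \<Rightarrow> nat \<Rightarrow> real) \<Rightarrow> (nat \<Rightarrow> real) \<Rightarrow> bool" where
  "stationary_dist n Q p \<longleftrightarrow>
     (\<forall>i<n. 0 \<le> p i) \<and> (\<Sum>i<n. p i) = 1 \<and>
     (\<forall>j<n. p j = (\<Sum>i<n. p i * Q i j))"

end

theory Submission
  imports Defs
begin

lemma bal_pos: "A \<ge> 2 \<Longrightarrow> bal A m < bal A (Suc m) \<and> 0 \<le> bal A m"
proof (induction m rule: nat_less_induct)
  case (1 m)
  show ?case
  proof (cases m)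
    case 0 then show ?thesis by simp
  next
    case (Suc k)
    then have "bal A k < bal A m" "0 \<le> bal A k" using 1 by auto
    moreover have "bal A (Suc m) = A * bal A m - bal A k" using Suc by simp
    moreover have "A * bal A m \<ge> 2 * bal A m" using 1(2) \<open>0 \<le> bal A k\<close> \<open>bal A k < bal A m\<close>
      by (intro mult_right_mono) auto
    ultimately show ?thesis by linarith
  qed
qed

lemma bal_sum: "(A - 2) * (\<Sum>l=1..m. bal A l) = bal A (Suc m) - bal A m - 1"
proof (induction m)
  case 0 then show ?case by simp
next
  case (Suc m)
  have "(A - 2) * (\<Sum>l=1..Suc m. bal A l) = (A - 2) * (\<Sum>l=1..m. bal A l) + (A-2) * bal A (Suc m)"
    by (simp add: algebra_simps)
  also have "\<dots> = bal A (Suc (Suc m)) - bal A (Suc m) - 1" using Suc by (simp add: algebra_simps)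
  finally show ?case .
qed

lemma L1:
  assumes "n \<ge> 3" "i < n" "1 \<le> j" "j \<le> n - 2"
  shows "transP A n i j = (if i = j - 1 \<or> i = j + 1 then 1 / real_of_int A else 0)"
proof -
  consider "i = 0" | "i = 1" | "i = n - 1" | "2 \<le> i \<and> i \<le> n - 2 \<and> i \<noteq> 0 \<and> i \<noteq> 1 \<and> i \<noteq> n - 1"
    using assms by linarith
  then show ?thesis
  proof cases
    case 1
    then have "j \<noteq> 0" "(j = 1) = (i = j - 1 \<or> i = j + 1)" using assms by auto
    then show ?thesis using 1 unfolding transP_def by simp
  next
    case 2
    then have "j \<noteq> 0" "(j = 2) = (i = j - 1 \<or> i = j + 1)" using assms by auto
    then show ?thesis using 2 unfolding transP_def by simp
  next
    case 3
    then have "j \<noteq> 0" "i \<noteq> 0" "i \<noteq> 1" "(j = n - 2) = (i = j - 1 \<or> i = j + 1)" using assms by auto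
    then show ?thesis using 3 unfolding transP_def by simp
  next
    case 4
    then have "j \<noteq> 0" "(j = i - 1 \<or> j = i + 1) = (i = j - 1 \<or> i = j + 1)" using assms by auto
    then show ?thesis using 4 unfolding transP_def by simp
  qed
qed

lemma L2:
  assumes "n \<ge> 3" "i < n"
  shows "transP A n i (n - 1) = (if i = n - 2 then 1 / real_of_int A else 0)"
proof -
  consider "i = 0" | "i = 1" | "i = n - 1" | "2 \<le> i \<and> i \<le> n - 2 \<and> i \<noteq> 0 \<and> i \<noteq> 1 \<and> i \<noteq> n - 1"
    using assms by linarith
  then show ?thesis
  proof cases
    case 1
    then have "n - 1 \<noteq> 0" "n - 1 \<noteq> 1" "i \<noteq> n - 2" using assms by auto
    then show ?thesis using 1 unfolding transP_def by simp
  next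
    case 2
    then have "n - 1 \<noteq> 0" "(n - 1 = 2) = (i = n - 2)" using assms by auto
    then show ?thesis using 2 unfolding transP_def by simp
  next
    case 3
    then have "n - 1 \<noteq> 0" "i \<noteq> 0" "i \<noteq> 1" "n - 1 \<noteq> n - 2" "i \<noteq> n - 2" using assms by auto
    then show ?thesis using 3 unfolding transP_def by simp
  next
    case 4
    then have "n - 1 \<noteq> 0" "(n - 1 = i - 1 \<or> n - 1 = i + 1) = (i = n - 2)" using assms by auto
    then show ?thesis using 4 unfolding transP_def by simp
  qed
qed

lemma L3:
  assumes "n \<ge> 3" "i < n"
  shows "transP A n i 0 = (if i = 0 \<or> i = 1 \<or> i = n - 1 then 1 - 1 / real_of_int A else 1 - 2 / real_of_int A)"
proof -
  consider "i = 0" | "i = 1" | "i = n - 1" | "2 \<le> i \<and> i \<le> n - 2 \<and> i \<noteq> 0 \<and> i \<noteq> 1 \<and> i \<noteq> n - 1"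
    using assms by linarith
  then show ?thesis
  proof cases
    case 1
    then show ?thesis unfolding transP_def by simp
  next
    case 2
    then show ?thesis unfolding transP_def by simp
  next
    case 3
    then have "i \<noteq> 0" "i \<noteq> 1" using assms by auto
    then show ?thesis using 3 unfolding transP_def by simp
  next
    case 4
    then show ?thesis unfolding transP_def by simp
  qed
qed

lemma S1:
  assumes "n \<ge> 3" "1 \<le> j" "j \<le> n - 2"
  shows "(\<Sum>i<n. p i * transP A n i j) = (p (j - 1) + p (j + 1)) / real_of_int A"
proof -
  have "(\<Sum>i<n. p i * transP A n i j) = (\<Sum>i<n. if i \<in> {j - 1, j + 1} then p i / real_of_int A else 0)"
    using assms by (intro sum.cong) (auto simp: L1)
  also have "\<dots> = (\<Sum>i\<in>{..<n} \<inter> {j - 1, j + 1}. p i / real_of_int A)"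
    by (simp add: sum.inter_restrict)
  also have "{..<n} \<inter> {j - 1, j + 1} = {j - 1, j + 1}" using assms by auto
  also have "(\<Sum>i\<in>{j - 1, j + 1}. p i / real_of_int A) = (p (j - 1) + p (j + 1)) / real_of_int A"
    using assms by (simp add: add_divide_distrib)
  finally show ?thesis .
qed

lemma S2:
  assumes "n \<ge> 3"
  shows "(\<Sum>i<n. p i * transP A n i (n - 1)) = p (n - 2) / real_of_int A"
proof -
  have "(\<Sum>i<n. p i * transP A n i (n - 1)) = (\<Sum>i<n. if i = n - 2 then p i / real_of_int A else 0)"
  proof (intro sum.cong refl)
    fix i assume "i \<in> {..<n}"
    then show "p i * transP A n i (n - 1) = (if i = n - 2 then p i / real_of_int A else 0)"
      using L2[OF assms, of i A] by simp
  qed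
  also have "\<dots> = p (n - 2) / real_of_int A" using assms by (simp add: sum.delta)
  finally show ?thesis .
qed

lemma S3:
  assumes "n \<ge> 3"
  shows "(\<Sum>i<n. p i * transP A n i 0) = (1 - 2 / real_of_int A) * (\<Sum>i<n. p i)
     + (p 0 + p 1 + p (n - 1)) / real_of_int A"
proof -
  have "(\<Sum>i<n. p i * transP A n i 0) = (\<Sum>i<n. (1 - 2 / real_of_int A) * p i
     + (if i \<in> {0, 1, n - 1} then p i / real_of_int A else 0))"
    using assms by (intro sum.cong) (auto simp: L3 algebra_simps diff_divide_distrib)
  also have "\<dots> = (1 - 2 / real_of_int A) * (\<Sum>i<n. p i)
     + (\<Sum>i\<in>{..<n} \<inter> {0, 1, n - 1}. p i / real_of_int A)"
    by (simp add: sum.distrib sum_distrib_left sum.inter_restrict)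
  also have "{..<n} \<inter> {0, 1, n - 1} = {0, 1, n - 1}" using assms by auto
  also have "(\<Sum>i\<in>{0, 1, n - 1}. p i / real_of_int A) = (p 0 + p 1 + p (n - 1)) / real_of_int A"
    using assms by (simp add: add_divide_distrib)
  finally show ?thesis .
qed

lemma sum_rev: "(\<Sum>i<(n::nat). f (n - i)) = (\<Sum>l=1..n. (f l :: real))"
proof (induction n)
  case 0 then show ?case by simp
next
  case (Suc n)
  have "(\<Sum>i<Suc n. f (Suc n - i)) = f (Suc n) + (\<Sum>i<n. f (n - i))"
    by (subst sum.lessThan_Suc_shift) simp
  then show ?case using Suc by simp
qed

theorem theorem5p1:
  fixes A :: int and n :: nat
  assumes "A > 2" and "n \<ge> 3"
  shows "\<forall>p :: nat \<Rightarrow> real.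
           stationary_dist n (transP A n) p \<longleftrightarrow>
           (\<forall>i<n. p i = real_of_int (bal A (n - i)) / (\<Sum>l=1..n. real_of_int (bal A l)))"
proof -
  define a where "a = real_of_int A"
  define x where "x k = real_of_int (bal A k)" for k
  define S where "S = (\<Sum>l=1..n. x l)"
  have a2: "a > 2" using assms(1) unfolding a_def by simp
  have xrec: "x (Suc (Suc m)) = a * x (Suc m) - x m" for m unfolding x_def a_def by simp
  have xpos: "x k > 0" if "k \<ge> 1" for k
  proof (cases k)
    case 0 then show ?thesis using that by simp
  next
    case (Suc m)
    have "bal A m < bal A (Suc m) \<and> 0 \<le> bal A m" using bal_pos[of A m] assms(1) by simp
    then show ?thesis unfolding x_def Suc by simp
  qed
  have x1: "x 1 = 1" and x2: "x 2 = a" unfolding x_def a_def by (simp_all add: numeral_2_eq_2)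
  have Spos: "S > 0" unfolding S_def
  proof (rule sum_pos)
    show "finite {1..n}" by simp
    show "{1..n} \<noteq> {}" using assms(2) by simp
    show "0 < x i" if "i \<in> {1..n}" for i using that xpos by simp
  qed
  have Sid: "(a - 2) * S = x (Suc n) - x n - 1"
  proof -
    have "real_of_int ((A - 2) * (\<Sum>l=1..n. bal A l)) = real_of_int (bal A (Suc n) - bal A n - 1)"
      using bal_sum[of A n] by simp
    then show ?thesis unfolding S_def x_def a_def by simp
  qed
  have sumx: "(\<Sum>i<n. x (n - i)) = S" unfolding S_def by (rule sum_rev)
  show ?thesis
  proof (rule allI, rule iffI)
    fix p :: "nat \<Rightarrow> real"
    assume st: "stationary_dist n (transP A n) p"
    then have eq: "\<And>j. j < n \<Longrightarrow> p j = (\<Sum>i<n. p i * transP A n i j)"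
      and s1: "(\<Sum>i<n. p i) = 1" unfolding stationary_dist_def by auto
    define c where "c = p (n - 1)"
    have pair: "k + 2 \<le> n \<longrightarrow> p (n - (k + 1)) = c * x (k + 1) \<and> p (n - (k + 2)) = c * x (k + 2)" for k
    proof (induction k)
      case 0
      have "p (n - 1) = p (n - 2) / a" using eq[of "n - 1"] S2[OF assms(2), of p A] assms(2)
        unfolding a_def by simp
      then have "p (n - 2) = a * p (n - 1)" using a2 by (simp add: field_simps)
      then show ?case using x1 x2 unfolding c_def by (simp add: mult.commute numeral_2_eq_2)
    next
      case (Suc k)
      show ?case
      proof
        assume h: "Suc k + 2 \<le> n"
        then have IH: "p (n - (k + 1)) = c * x (k + 1)" "p (n - (k + 2)) = c * x (k + 2)"
          using Suc by auto
        define j where "j = n - (k + 2)"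
        have j: "1 \<le> j" "j \<le> n - 2" "j < n" using h assms(2) unfolding j_def by auto
        have "p j = (p (j - 1) + p (j + 1)) / a" using eq[OF j(3)] S1[OF assms(2) j(1) j(2), of p A]
          unfolding a_def by simp
        moreover have "j - 1 = n - (Suc k + 2)" "j + 1 = n - (k + 1)" using h unfolding j_def by auto
        ultimately have "p (n - (Suc k + 2)) = a * p (n - (k + 2)) - p (n - (k + 1))"
          using a2 unfolding j_def by (simp add: field_simps)
        also have "\<dots> = c * (a * x (k + 2) - x (k + 1))" using IH by (simp add: algebra_simps)
        also have "\<dots> = c * x (Suc k + 2)" using xrec[of "Suc k"] by simp
        finally show "p (n - (Suc k + 1)) = c * x (Suc k + 1) \<and> p (n - (Suc k + 2)) = c * x (Suc k + 2)"
          using IH by simp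
      qed
    qed
    have pc: "p i = c * x (n - i)" if "i < n" for i
    proof (cases "i = n - 1")
      case True then show ?thesis using x1 that unfolding c_def by simp
    next
      case False
      then have "n - i - 2 + 2 \<le> n" "n - (n - i - 2 + 2) = i" "n - i - 2 + 2 = n - i" using that by auto
      then show ?thesis using pair[of "n - i - 2"] by simp
    qed
    have "1 = (\<Sum>i<n. c * x (n - i))" using s1 pc by simp
    also have "\<dots> = c * S" using sumx by (simp add: sum_distrib_left[symmetric])
    finally have "c = 1 / S" using Spos by (simp add: field_simps)
    then show "\<forall>i<n. p i = real_of_int (bal A (n - i)) / (\<Sum>l=1..n. real_of_int (bal A l))"
      using pc unfolding S_def x_def by simp
  next
    fix p :: "nat \<Rightarrow> real"
    assume "\<forall>i<n. p i = real_of_int (bal A (n - i)) / (\<Sum>l=1..n. real_of_int (bal A l))"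
    then have pd: "\<And>i. i < n \<Longrightarrow> p i = x (n - i) / S" unfolding S_def x_def by simp
    have nn: "\<forall>i<n. 0 \<le> p i" using pd xpos Spos by (auto intro!: divide_nonneg_pos less_imp_le)
    have "(\<Sum>i<n. p i) = (\<Sum>i<n. x (n - i) / S)" using pd by simp
    also have "\<dots> = S / S" using sumx by (simp add: sum_divide_distrib[symmetric])
    finally have s1: "(\<Sum>i<n. p i) = 1" using Spos by simp
    have "p j = (\<Sum>i<n. p i * transP A n i j)" if jn: "j < n" for j
    proof -
      consider "j = 0" | "j = n - 1" | "1 \<le> j \<and> j \<le> n - 2" using jn by linarith
      then show ?thesis
      proof cases
        case 1
        have "(\<Sum>i<n. p i * transP A n i j) = (1 - 2 / a) + (p 0 + p 1 + p (n - 1)) / a"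
          using S3[OF assms(2), of p A] s1 1 unfolding a_def by simp
        also have "\<dots> = (1 - 2 / a) + (x n + x (n - 1) + 1) / (a * S)"
          using pd[of 0] pd[of 1] pd[of "n - 1"] assms(2) x1 by (simp add: add_divide_distrib mult.commute)
        also have "\<dots> = ((a - 2) * S + x n + x (n - 1) + 1) / (a * S)"
          using a2 Spos by (simp add: field_simps)
        also have "\<dots> = (x (Suc n) + x (n - 1)) / (a * S)" using Sid by simp
        also have "x (Suc n) = a * x n - x (n - 1)"
          using xrec[of "n - 1"] assms(2) by (simp add: Suc_diff_Suc numeral_2_eq_2)
        also have "(a * x n - x (n - 1) + x (n - 1)) / (a * S) = x n / S" using a2 by simp
        finally show ?thesis using pd[of 0] 1 assms(2) by simp
      next
        case 2
        have "(\<Sum>i<n. p i * transP A n i j) = p (n - 2) / a"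
          using S2[OF assms(2), of p A] 2 unfolding a_def by simp
        also have "\<dots> = 1 / S" using pd[of "n - 2"] assms(2) x2 a2
          by (simp add: numeral_2_eq_2)
        finally show ?thesis using pd[of "n - 1"] 2 assms(2) x1 by simp
      next
        case 3
        define m where "m = n - j - 1"
        have m: "n - (j - 1) = Suc (Suc m)" "n - (j + 1) = m" "n - j = Suc m" using 3 assms(2) unfolding m_def by auto
        have "(\<Sum>i<n. p i * transP A n i j) = (p (j - 1) + p (j + 1)) / a"
          using S1[OF assms(2), of j p A] 3 unfolding a_def by simp
        also have "\<dots> = (x (Suc (Suc m)) + x m) / S / a"
        proof -
          have "j - 1 < n" "j + 1 < n" using 3 assms(2) by auto
          then have "p (j - 1) = x (Suc (Suc m)) / S" "p (j + 1) = x m / S" using pd m by auto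
          then show ?thesis by (simp add: add_divide_distrib)
        qed
        also have "\<dots> = x (Suc m) / S" using xrec[of m] a2 by simp
        finally show ?thesis using pd[of j] jn m by simp
      qed
    qed
    then show "stationary_dist n (transP A n) p" unfolding stationary_dist_def using nn s1 by auto
  qed
qed

end
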